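(* Let $xy$ be a heavy pair such that $y$ lies strictly above $r(x)$ on the path $\pi(s,u_{H_x})$ and the $T$-edge $(y,y_h)$ lies on $\pi_x(s,H_x)$. Let $\widehat C(x,y)=\bigcup\{C\in\mathcal{C}_x:(y,y_h)\in\pi_x(s,C)\}$. Then $G\setminus\{x,y\}$ is connected if and only if there is an edge of $G\setminus\{x,y\}$ with exactly one endpoint in $\widehat C(x,y)\cup H_y$.
   Context: $G=(V,E)$ is a connected graph with no cut vertex, $T$ a BFS tree rooted at $s$, $\pi(u,v)$ the $T$-path, $T_x$ the subtree at $x$, $V_x=V(T_x)\setminus\{x\}$. The heavy child $x_h$ of a non-leaf $x$ is its child with largest subtree (ties broken consistently). $\mathcal{C}_x$ is the set of components of $G[V_x]$, $C_{x,v}$ the one containing $v$, and $H_x=C_{x,x_h}$. For each $C\in\mathcal{C}_x$ a fixed edge $(u_C,v_C)\in E$ with $v_C\in C$, $u_C\notin V(T_x)$, and $\pi_x(s,C)=\pi(s,u_C)\circ(u_C,v_C)$. $R(x)=\{v\in V\setminus V(T_x):v\text{ has a neighbour in }H_x\}$ and $r(x)$ is the $T$-lowest common ancestor of $R(x)$. $x,y$ is independent if neither is a $T$-ancestor of the other. For independent $x,y$, $C\in\mathcal{C}_x$ is fully-$y$-sensitive if $y\in\pi_x(s,C)$ and $\pi_x(s,C)$ contains no $T$-edge $(y,y')$ with $x\notin\pi_y(s,C_{y,y'})$; $\mathcal{FS}(x,y)$ is the set of such components. $\langle x,y\rangle$ is an ordered light pair if some $C\in\mathcal{FS}(x,y)$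 has $(y,y_h)\notin\pi_x(s,C)$; an independent pair $xy$ is heavy if neither ordering is an ordered light pair. *)

theory Defs
  imports Main
begin

text \<open>Simple undirected graph: finite vertex set V, symmetric irreflexive
edge relation E on V.  The BFS tree T rooted at s is given by a parent
function p (with the normalisation p s = s).\<close>

definition simple_graph :: "'a set \<Rightarrow> ('a \<Rightarrow> 'a \<Rightarrow> bool) \<Rightarrow> bool" where
  "simple_graph V E \<longleftrightarrow> finite V \<and> (\<forall>u v. E u v \<longrightarrow> u \<in> V \<and> v \<in> V)
     \<and> (\<forall>u v. E u v \<longrightarrow> E v u) \<and> (\<forall>u. \<not> E u u)"

definition walk_in :: "'a set \<Rightarrow> ('a \<Rightarrow> 'a \<Rightarrow> bool) \<Rightarrow> 'a list \<Rightarrow> bool" where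
  "walk_in S E xs \<longleftrightarrow> xs \<noteq> [] \<and> set xs \<subseteq> S \<and>
     (\<forall>i. Suc i < length xs \<longrightarrow> E (xs ! i) (xs ! Suc i))"

definition connected_in :: "'a set \<Rightarrow> ('a \<Rightarrow> 'a \<Rightarrow> bool) \<Rightarrow> bool" where
  "connected_in S E \<longleftrightarrow> (\<forall>u\<in>S. \<forall>v\<in>S. \<exists>xs. walk_in S E xs \<and> hd xs = u \<and> last xs = v)"

definition no_cut_vertex :: "'a set \<Rightarrow> ('a \<Rightarrow> 'a \<Rightarrow> bool) \<Rightarrow> bool" where
  "no_cut_vertex V E \<longleftrightarrow> (\<forall>v\<in>V. connected_in (V - {v}) E)"

definition gdist :: "'a set \<Rightarrow> ('a \<Rightarrow> 'a \<Rightarrow> bool) \<Rightarrow> 'a \<Rightarrow> 'a \<Rightarrow> nat" where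
  "gdist V E u v = (LEAST k. \<exists>xs. walk_in V E xs \<and> hd xs = u \<and> last xs = v \<and> length xs = Suc k)"

definition bfs_tree :: "'a set \<Rightarrow> ('a \<Rightarrow> 'a \<Rightarrow> bool) \<Rightarrow> 'a \<Rightarrow> ('a \<Rightarrow> 'a) \<Rightarrow> bool" where
  "bfs_tree V E s p \<longleftrightarrow> s \<in> V \<and> p s = s \<and>
     (\<forall>v\<in>V - {s}. p v \<in> V \<and> E (p v) v \<and> Suc (gdist V E s (p v)) = gdist V E s v)"

text \<open>T-ancestor (reflexive): a lies on the tree path pi(s,v).\<close>
definition anc :: "('a \<Rightarrow> 'a) \<Rightarrow> 'a \<Rightarrow> 'a \<Rightarrow> bool" where
  "anc p a v \<longleftrightarrow> (\<exists>n. (p ^^ n) v = a)"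

definition tchild :: "'a set \<Rightarrow> 'a \<Rightarrow> ('a \<Rightarrow> 'a) \<Rightarrow> 'a \<Rightarrow> 'a \<Rightarrow> bool" where
  "tchild V s p x c \<longleftrightarrow> c \<in> V \<and> c \<noteq> s \<and> p c = x"

definition VT :: "'a set \<Rightarrow> ('a \<Rightarrow> 'a) \<Rightarrow> 'a \<Rightarrow> 'a set" where
  "VT V p x = {v \<in> V. anc p x v}"

definition Vx :: "'a set \<Rightarrow> ('a \<Rightarrow> 'a) \<Rightarrow> 'a \<Rightarrow> 'a set" where
  "Vx V p x = VT V p x - {x}"

text \<open>hc is a heavy-child function: for every non-leaf x, hc x is a child of x
with largest subtree (ties broken by the fixed function hc).\<close>
definition heavy_child_fun :: "'a set \<Rightarrow> 'a \<Rightarrow> ('a \<Rightarrow> 'a) \<Rightarrow> ('a \<Rightarrow> 'a) \<Rightarrow> bool" where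
  "heavy_child_fun V s p hc \<longleftrightarrow> (\<forall>x\<in>V. (\<exists>c. tchild V s p x c) \<longrightarrow>
      tchild V s p x (hc x) \<and> (\<forall>c. tchild V s p x c \<longrightarrow> card (VT V p c) \<le> card (VT V p (hc x))))"

definition comp_of :: "'a set \<Rightarrow> ('a \<Rightarrow> 'a \<Rightarrow> bool) \<Rightarrow> 'a \<Rightarrow> 'a set" where
  "comp_of S E v = {w. \<exists>xs. walk_in S E xs \<and> hd xs = v \<and> last xs = w}"

definition comps :: "'a set \<Rightarrow> ('a \<Rightarrow> 'a \<Rightarrow> bool) \<Rightarrow> 'a set set" where
  "comps S E = comp_of S E ` S"

definition Hc :: "'a set \<Rightarrow> ('a \<Rightarrow> 'a \<Rightarrow> bool) \<Rightarrow> ('a \<Rightarrow> 'a) \<Rightarrow> ('a \<Rightarrow> 'a) \<Rightarrow> 'a \<Rightarrow> 'a set" where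
  "Hc V E p hc x = comp_of (Vx V p x) E (hc x)"

definition attach_edges :: "'a set \<Rightarrow> ('a \<Rightarrow> 'a \<Rightarrow> bool) \<Rightarrow> 'a \<Rightarrow> ('a \<Rightarrow> 'a)
      \<Rightarrow> ('a \<Rightarrow> 'a set \<Rightarrow> 'a) \<Rightarrow> ('a \<Rightarrow> 'a set \<Rightarrow> 'a) \<Rightarrow> bool" where
  "attach_edges V E s p uC vC \<longleftrightarrow> (\<forall>x\<in>V - {s}. \<forall>C\<in>comps (Vx V p x) E.
      E (uC x C) (vC x C) \<and> vC x C \<in> C \<and> uC x C \<in> V \<and> uC x C \<notin> VT V p x)"

text \<open>Vertex w lies on pi_x(s,C) = pi(s,u_C) o (u_C,v_C).\<close>
definition on_pix :: "('a \<Rightarrow> 'a) \<Rightarrow> ('a \<Rightarrow> 'a set \<Rightarrow> 'a) \<Rightarrow> ('a \<Rightarrow> 'a set \<Rightarrow> 'a)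
      \<Rightarrow> 'a \<Rightarrow> 'a set \<Rightarrow> 'a \<Rightarrow> bool" where
  "on_pix p uC vC x C w \<longleftrightarrow> anc p w (uC x C) \<or> w = vC x C"

text \<open>The T-edge (y,y') (y' a child of y) lies on pi_x(s,C).  (The last edge
(u_C,v_C) is never a T-edge, so only the tree part pi(s,u_C) matters.)\<close>
definition tedge_on_pix :: "'a set \<Rightarrow> 'a \<Rightarrow> ('a \<Rightarrow> 'a) \<Rightarrow> ('a \<Rightarrow> 'a set \<Rightarrow> 'a)
      \<Rightarrow> 'a \<Rightarrow> 'a set \<Rightarrow> 'a \<Rightarrow> 'a \<Rightarrow> bool" where
  "tedge_on_pix V s p uC x C y y' \<longleftrightarrow> tchild V s p y y' \<and> anc p y' (uC x C)"

definition independent :: "('a \<Rightarrow> 'a) \<Rightarrow> 'a \<Rightarrow> 'a \<Rightarrow> bool" where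
  "independent p x y \<longleftrightarrow> \<not> anc p x y \<and> \<not> anc p y x"

definition fully_sensitive :: "'a set \<Rightarrow> ('a \<Rightarrow> 'a \<Rightarrow> bool) \<Rightarrow> 'a \<Rightarrow> ('a \<Rightarrow> 'a)
      \<Rightarrow> ('a \<Rightarrow> 'a set \<Rightarrow> 'a) \<Rightarrow> ('a \<Rightarrow> 'a set \<Rightarrow> 'a) \<Rightarrow> 'a \<Rightarrow> 'a \<Rightarrow> 'a set set" where
  "fully_sensitive V E s p uC vC x y = {C \<in> comps (Vx V p x) E.
      on_pix p uC vC x C y \<and>
      \<not> (\<exists>y'. tedge_on_pix V s p uC x C y y' \<and>
              \<not> on_pix p uC vC y (comp_of (Vx V p y) E y') x)}"

definition ordered_light_pair :: "'a set \<Rightarrow> ('a \<Rightarrow> 'a \<Rightarrow> bool) \<Rightarrow> 'a \<Rightarrow> ('a \<Rightarrow> 'a)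
      \<Rightarrow> ('a \<Rightarrow> 'a) \<Rightarrow> ('a \<Rightarrow> 'a set \<Rightarrow> 'a) \<Rightarrow> ('a \<Rightarrow> 'a set \<Rightarrow> 'a) \<Rightarrow> 'a \<Rightarrow> 'a \<Rightarrow> bool" where
  "ordered_light_pair V E s p hc uC vC x y \<longleftrightarrow>
     (\<exists>C\<in>fully_sensitive V E s p uC vC x y. \<not> tedge_on_pix V s p uC x C y (hc y))"

definition heavy_pair :: "'a set \<Rightarrow> ('a \<Rightarrow> 'a \<Rightarrow> bool) \<Rightarrow> 'a \<Rightarrow> ('a \<Rightarrow> 'a)
      \<Rightarrow> ('a \<Rightarrow> 'a) \<Rightarrow> ('a \<Rightarrow> 'a set \<Rightarrow> 'a) \<Rightarrow> ('a \<Rightarrow> 'a set \<Rightarrow> 'a) \<Rightarrow> 'a \<Rightarrow> 'a \<Rightarrow> bool" where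
  "heavy_pair V E s p hc uC vC x y \<longleftrightarrow> x \<in> V \<and> y \<in> V \<and> independent p x y \<and>
     \<not> ordered_light_pair V E s p hc uC vC x y \<and> \<not> ordered_light_pair V E s p hc uC vC y x"

definition Rset :: "'a set \<Rightarrow> ('a \<Rightarrow> 'a \<Rightarrow> bool) \<Rightarrow> ('a \<Rightarrow> 'a) \<Rightarrow> ('a \<Rightarrow> 'a) \<Rightarrow> 'a \<Rightarrow> 'a set" where
  "Rset V E p hc x = {v \<in> V - VT V p x. \<exists>w\<in>Hc V E p hc x. E v w}"

definition tlca :: "('a \<Rightarrow> 'a) \<Rightarrow> 'a set \<Rightarrow> 'a" where
  "tlca p A = (THE a. (\<forall>v\<in>A. anc p a v) \<and> (\<forall>b. (\<forall>v\<in>A. anc p b v) \<longrightarrow> anc p b a))"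

definition rx :: "'a set \<Rightarrow> ('a \<Rightarrow> 'a \<Rightarrow> bool) \<Rightarrow> ('a \<Rightarrow> 'a) \<Rightarrow> ('a \<Rightarrow> 'a) \<Rightarrow> 'a \<Rightarrow> 'a" where
  "rx V E p hc x = tlca p (Rset V E p hc x)"

definition Chat :: "'a set \<Rightarrow> ('a \<Rightarrow> 'a \<Rightarrow> bool) \<Rightarrow> 'a \<Rightarrow> ('a \<Rightarrow> 'a) \<Rightarrow> ('a \<Rightarrow> 'a)
      \<Rightarrow> ('a \<Rightarrow> 'a set \<Rightarrow> 'a) \<Rightarrow> 'a \<Rightarrow> 'a \<Rightarrow> 'a set" where
  "Chat V E s p hc uC x y = \<Union>{C \<in> comps (Vx V p x) E. tedge_on_pix V s p uC x C y (hc y)}"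

end

theory Submission
  imports Defs
begin


definition RA :: "'a set \<Rightarrow> ('a \<Rightarrow> 'a \<Rightarrow> bool) \<Rightarrow> 'a \<Rightarrow> 'a \<Rightarrow> bool" where
  "RA A E = (\<lambda>u v. E u v \<and> u \<in> A \<and> v \<in> A)"

lemma walk_rt: "walk_in A E xs \<Longrightarrow> (RA A E)\<^sup>*\<^sup>* (hd xs) (last xs)"
proof (induction xs)
  case Nil then show ?case by (simp add: walk_in_def)
next
  case (Cons x ys)
  show ?case
  proof (cases "ys = []")
    case True then show ?thesis by simp
  next
    case False
    have w: "walk_in A E ys"
      using Cons.prems False unfolding walk_in_def
      by (metis Suc_less_eq length_Cons list.set_intros(2) nth_Cons_Suc subset_code(1))
    have "E x (hd ys)" using Cons.prems False unfolding walk_in_def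
      by (metis hd_conv_nth length_Cons length_greater_0_conv nth_Cons_0 nth_Cons_Suc zero_less_Suc Suc_less_eq)
    moreover have "x \<in> A" "hd ys \<in> A" using Cons.prems False unfolding walk_in_def
      by auto
    ultimately have "RA A E x (hd ys)" by (simp add: RA_def)
    then show ?thesis using Cons.IH[OF w] False
      by (simp add: converse_rtranclp_into_rtranclp)
  qed
qed

lemma walk_snoc: "walk_in A E xs \<Longrightarrow> E (last xs) c \<Longrightarrow> c \<in> A \<Longrightarrow> walk_in A E (xs @ [c])"
  unfolding walk_in_def
  apply (auto simp: nth_append)
  by (metis Suc_lessI last_conv_nth diff_Suc_1 less_nat_zero_code list.size(3))

lemma rt_walk: "(RA A E)\<^sup>*\<^sup>* a b \<Longrightarrow> a \<in> A \<Longrightarrow> \<exists>xs. walk_in A E xs \<and> hd xs = a \<and> last xs = b"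
proof (induction rule: rtranclp_induct)
  case base
  then show ?case by (intro exI[of _ "[a]"]) (simp add: walk_in_def)
next
  case (step y z)
  then obtain xs where w: "walk_in A E xs" "hd xs = a" "last xs = y" by blast
  from step have ez: "E y z" "z \<in> A" by (auto simp: RA_def)
  have "walk_in A E (xs @ [z])" using walk_snoc[OF w(1)] w(3) ez by blast
  moreover have "hd (xs @ [z]) = a" "last (xs @ [z]) = z" using w by (auto simp: walk_in_def)
  ultimately have "walk_in A E (xs @ [z])" "hd (xs @ [z]) = a" "last (xs @ [z]) = z" by auto
  then show ?case by blast
qed

lemma comp_iff: "b \<in> comp_of A E a \<longleftrightarrow> a \<in> A \<and> (RA A E)\<^sup>*\<^sup>* a b"
proof
  assume "b \<in> comp_of A E a"
  then obtain xs where w: "walk_in A E xs" "hd xs = a" "last xs = b" by (auto simp: comp_of_def)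
  have "(RA A E)\<^sup>*\<^sup>* a b" using walk_rt[OF w(1)] w(2,3) by simp
  moreover have "a \<in> A" using w(1,2) unfolding walk_in_def by auto
  ultimately show "a \<in> A \<and> (RA A E)\<^sup>*\<^sup>* a b" by simp
next
  assume h: "a \<in> A \<and> (RA A E)\<^sup>*\<^sup>* a b"
  have "\<exists>xs. walk_in A E xs \<and> hd xs = a \<and> last xs = b" using h rt_walk[of A E a b] by simp
  then obtain xs where "walk_in A E xs" "hd xs = a" "last xs = b" by blast
  then show "b \<in> comp_of A E a" unfolding comp_of_def by blast
qed

lemma rt_in: "(RA A E)\<^sup>*\<^sup>* a b \<Longrightarrow> a \<in> A \<Longrightarrow> b \<in> A"
  by (induction rule: rtranclp_induct) (auto simp: RA_def)

lemma comp_sub: "comp_of A E a \<subseteq> A"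
proof
  fix b assume "b \<in> comp_of A E a"
  then have "a \<in> A \<and> (RA A E)\<^sup>*\<^sup>* a b" by (rule comp_iff[THEN iffD1])
  then show "b \<in> A" using rt_in[of A E a b] by simp
qed

lemma comp_self: "a \<in> A \<Longrightarrow> a \<in> comp_of A E a"
  by (simp add: comp_iff)

lemma rt_mono: "(RA A E)\<^sup>*\<^sup>* a b \<Longrightarrow> A \<subseteq> B \<Longrightarrow> (RA B E)\<^sup>*\<^sup>* a b"
  by (erule rtranclp_mono[THEN predicate2D, rotated]) (auto simp: RA_def)

lemma crossing: "R\<^sup>*\<^sup>* a b \<Longrightarrow> P a \<Longrightarrow> \<not> P b \<Longrightarrow> \<exists>u v. R u v \<and> P u \<and> \<not> P v"
  by (induction rule: rtranclp_induct) auto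

locale tr =
  fixes V :: "'a set" and E s p
  assumes graph: "simple_graph V E" and bfs: "bfs_tree V E s p"
begin

lemma sV: "s \<in> V" using bfs by (simp add: bfs_tree_def)
lemma ps: "p s = s" using bfs by (simp add: bfs_tree_def)
lemma pV: "v \<in> V \<Longrightarrow> p v \<in> V" using bfs ps by (cases "v = s") (auto simp: bfs_tree_def)
lemma Esym: "E u v \<Longrightarrow> E v u" using graph by (simp add: simple_graph_def)
lemma EV: "E u v \<Longrightarrow> u \<in> V \<and> v \<in> V" using graph by (simp add: simple_graph_def)
lemma pE: "v \<in> V \<Longrightarrow> v \<noteq> s \<Longrightarrow> E (p v) v" using bfs by (simp add: bfs_tree_def)
lemma gd_lt: "v \<in> V \<Longrightarrow> v \<noteq> s \<Longrightarrow> gdist V E s (p v) < gdist V E s v"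
  using bfs by (simp add: bfs_tree_def) (metis DiffI Suc_le_lessD order_refl singletonD)
lemma gd_le: "v \<in> V \<Longrightarrow> gdist V E s (p v) \<le> gdist V E s v"
  using gd_lt ps by (cases "v = s") (auto intro: less_imp_le)
lemma funpow_V: "v \<in> V \<Longrightarrow> (p^^n) v \<in> V"
  by (induction n) (auto simp: pV)
lemma funpow_s: "(p^^n) s = s"
  by (induction n) (auto simp: ps)
lemma gd_funpow: "v \<in> V \<Longrightarrow> gdist V E s ((p^^n) v) \<le> gdist V E s v"
  by (induction n) (auto intro: le_trans gd_le funpow_V)
lemma cyc: "v \<in> V \<Longrightarrow> (p^^Suc k) v = v \<Longrightarrow> v = s"
proof (rule ccontr)
  assume a: "v \<in> V" "(p^^Suc k) v = v" "v \<noteq> s"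
  have e: "(p^^k) (p v) = v" using a(2) by (metis funpow_Suc_right comp_apply)
  have "gdist V E s ((p^^k) (p v)) \<le> gdist V E s (p v)" using gd_funpow pV a(1) by blast
  then have "gdist V E s v \<le> gdist V E s (p v)" using e by simp
  then show False using gd_lt a by fastforce
qed
lemma anc_refl: "anc p a a" unfolding anc_def by (rule exI[of _ 0]) simp
lemma anc_p: "anc p (p a) a" unfolding anc_def by (rule exI[of _ 1]) simp
lemma anc_trans: "anc p a b \<Longrightarrow> anc p b c \<Longrightarrow> anc p a c"
  unfolding anc_def by (metis comp_apply funpow_add)
lemma anc_antisym: "b \<in> V \<Longrightarrow> anc p a b \<Longrightarrow> anc p b a \<Longrightarrow> a = b"
proof -
  assume b: "b \<in> V" and "anc p a b" "anc p b a"
  then obtain m n where m: "(p^^m) b = a" and n: "(p^^n) a = b" unfolding anc_def by blast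
  have e: "(p^^(n+m)) b = b" using m n by (simp add: funpow_add)
  show "a = b"
  proof (cases "n + m")
    case 0 then show ?thesis using m by simp
  next
    case (Suc k)
    then have "b = s" using cyc[OF b] e by simp
    then show ?thesis using m funpow_s by simp
  qed
qed
lemma anc_lin: "anc p a w \<Longrightarrow> anc p b w \<Longrightarrow> anc p a b \<or> anc p b a"
proof -
  assume "anc p a w" "anc p b w"
  then obtain m n where m: "(p^^m) w = a" and n: "(p^^n) w = b" unfolding anc_def by blast
  show ?thesis
  proof (cases "m \<le> n")
    case True
    then have "(p^^n) w = (p^^(n-m)) ((p^^m) w)" by (metis comp_apply funpow_add le_add_diff_inverse2)
    then show ?thesis using m n unfolding anc_def by metis
  next
    case False
    then have "(p^^m) w = (p^^(m-n)) ((p^^n) w)" by (metis comp_apply funpow_add le_add_diff_inverse2 nat_le_linear)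
    then show ?thesis using m n unfolding anc_def by metis
  qed
qed
lemma anc_step: "anc p a b \<Longrightarrow> a \<noteq> b \<Longrightarrow> anc p a (p b)"
  unfolding anc_def by (metis funpow_0 comp_apply funpow_Suc_right not0_implies_Suc)
lemma root: "v \<in> V \<Longrightarrow> anc p s v"
proof (induction "gdist V E s v" arbitrary: v rule: less_induct)
  case less
  show ?case
  proof (cases "v = s")
    case True then show ?thesis by (simp add: anc_refl)
  next
    case False
    then have "anc p s (p v)" using less gd_lt pV by blast
    then show ?thesis using anc_p anc_trans by blast
  qed
qed
lemma tchild_props: "tchild V s p y c \<Longrightarrow> anc p y c \<and> c \<noteq> y \<and> c \<in> V \<and> y \<in> V"
proof -
  assume t: "tchild V s p y c"
  then have c: "c \<in> V" "c \<noteq> s" "p c = y" by (auto simp: tchild_def)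
  have "c \<noteq> y" using cyc[of c 0] c by auto
  then show ?thesis using c anc_p pV by metis
qed

lemma rt_sym: "(RA A E)\<^sup>*\<^sup>* a b \<Longrightarrow> (RA A E)\<^sup>*\<^sup>* b a"
proof (induction rule: rtranclp_induct)
  case base then show ?case by simp
next
  case (step y z)
  then have "RA A E z y" by (auto simp: RA_def Esym)
  then show ?case using step by (simp add: converse_rtranclp_into_rtranclp)
qed

lemma comp_conn: "z1 \<in> comp_of A E c \<Longrightarrow> z2 \<in> comp_of A E c \<Longrightarrow> A \<subseteq> B \<Longrightarrow> (RA B E)\<^sup>*\<^sup>* z1 z2"
  by (meson comp_iff rt_mono rt_sym rtranclp_trans)

lemma comp_eq: "v \<in> comp_of A E a \<Longrightarrow> comp_of A E v = comp_of A E a"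
  by (auto simp: comp_iff) (meson rt_in rt_sym rtranclp_trans)+

lemma path: "w \<in> V \<Longrightarrow> (p^^n) w = c \<Longrightarrow> (\<forall>k\<le>n. (p^^k) w \<in> A) \<Longrightarrow> (RA A E)\<^sup>*\<^sup>* c w"
proof (induction n arbitrary: w)
  case 0 then show ?case by simp
next
  case (Suc n)
  have "(p^^n) (p w) = c" using Suc.prems by (metis funpow_Suc_right comp_apply)
  moreover have "\<forall>k\<le>n. (p^^k) (p w) \<in> A"
  proof (intro allI impI)
    fix k assume "k \<le> n"
    then have "Suc k \<le> Suc n" by simp
    then have "(p^^Suc k) w \<in> A" using Suc.prems(3) by blast
    then show "(p^^k) (p w) \<in> A" by (metis funpow_Suc_right comp_apply)
  qed
  ultimately have ih: "(RA A E)\<^sup>*\<^sup>* c (p w)" using Suc.IH pV Suc.prems by blast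
  show ?case
  proof (cases "w = s")
    case True then show ?thesis using ih ps by simp
  next
    case False
    have "p w \<in> A" using Suc.prems(3)[rule_format, of 1] by simp
    moreover have "w \<in> A" using Suc.prems(3)[rule_format, of 0] by simp
    ultimately have "RA A E (p w) w" using pE False Suc.prems by (simp add: RA_def)
    then show ?thesis using ih by simp
  qed
qed

lemma subtree: "y \<in> V \<Longrightarrow> c \<in> Vx V p y \<Longrightarrow> anc p c w \<Longrightarrow> w \<in> V \<Longrightarrow> w \<in> comp_of (Vx V p y) E c"
proof -
  assume y: "y \<in> V" and c: "c \<in> Vx V p y" and cw: "anc p c w" and w: "w \<in> V"
  obtain n where n: "(p^^n) w = c" using cw unfolding anc_def by blast
  have yc: "anc p y c" "c \<noteq> y" using c by (auto simp: Vx_def VT_def)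
  have "\<forall>k\<le>n. (p^^k) w \<in> Vx V p y"
  proof (intro allI impI)
    fix k assume k: "k \<le> n"
    have "(p^^n) w = (p^^(n-k)) ((p^^k) w)" using k by (metis comp_apply funpow_add le_add_diff_inverse2)
    then have ck: "anc p c ((p^^k) w)" using n unfolding anc_def by metis
    then have "anc p y ((p^^k) w)" using yc anc_trans by blast
    moreover have "(p^^k) w \<noteq> y" using ck yc anc_antisym[OF y] by blast
    ultimately show "(p^^k) w \<in> Vx V p y" using funpow_V[OF w] by (simp add: Vx_def VT_def)
  qed
  then have "(RA (Vx V p y) E)\<^sup>*\<^sup>* c w" using path[OF w n] by blast
  then show ?thesis using c by (simp add: comp_iff)
qed

lemma outside: "v \<in> V \<Longrightarrow> \<not> anc p x v \<Longrightarrow> \<not> anc p y v \<Longrightarrow> (RA (V - {x,y}) E)\<^sup>*\<^sup>* s v"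
proof -
  assume v: "v \<in> V" "\<not> anc p x v" "\<not> anc p y v"
  obtain n where n: "(p^^n) v = s" using root[OF v(1)] unfolding anc_def by blast
  have "\<forall>k\<le>n. (p^^k) v \<in> V - {x,y}"
    using v funpow_V unfolding anc_def by blast
  then show ?thesis using path[OF v(1) n] by blast
qed

lemma tlca_ok: "A \<subseteq> V \<Longrightarrow> v0 \<in> A \<Longrightarrow> \<forall>v\<in>A. anc p (tlca p A) v"
proof -
  assume A: "A \<subseteq> V" "v0 \<in> A"
  let ?P = "\<lambda>a. (\<forall>v\<in>A. anc p a v) \<and> (\<forall>b. (\<forall>v\<in>A. anc p b v) \<longrightarrow> anc p b a)"
  let ?Q = "\<lambda>n. \<forall>v\<in>A. anc p ((p^^n) v0) v"
  obtain n where "(p^^n) v0 = s" using root A unfolding anc_def by blast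
  then have "?Q n" using root A by auto
  define n0 where "n0 = (LEAST n. ?Q n)"
  have q0: "?Q n0" unfolding n0_def by (rule LeastI, fact)
  have P0: "?P ((p^^n0) v0)"
  proof (intro conjI allI impI)
    show "\<forall>v\<in>A. anc p ((p^^n0) v0) v" using q0 .
  next
    fix b assume b: "\<forall>v\<in>A. anc p b v"
    then obtain m where m: "(p^^m) v0 = b" using A unfolding anc_def by blast
    then have "?Q m" using b by simp
    then have "n0 \<le> m" unfolding n0_def by (rule Least_le)
    then have "(p^^m) v0 = (p^^(m-n0)) ((p^^n0) v0)" by (metis comp_apply funpow_add le_add_diff_inverse2)
    then show "anc p b ((p^^n0) v0)" using m unfolding anc_def by metis
  qed
  have uq: "\<And>a a'. ?P a \<Longrightarrow> ?P a' \<Longrightarrow> a = a'"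
  proof -
    fix a a' assume "?P a" "?P a'"
    then have "anc p a a'" "anc p a' a" by blast+
    moreover have "a' \<in> V"
    proof -
      have "anc p a' v0" using \<open>?P a'\<close> A(2) by blast
      then obtain k where "(p^^k) v0 = a'" unfolding anc_def by blast
      then show ?thesis using funpow_V A by blast
    qed
    ultimately show "a = a'" using anc_antisym by blast
  qed
  have "?P (THE a. ?P a)" using theI[of ?P "(p^^n0) v0", OF P0] uq P0 by blast
  then show ?thesis unfolding tlca_def by blast
qed

end



theorem claim4p25:
  fixes V :: "'a set" and E :: "'a \<Rightarrow> 'a \<Rightarrow> bool" and s :: 'a
    and p hc :: "'a \<Rightarrow> 'a" and uC vC :: "'a \<Rightarrow> 'a set \<Rightarrow> 'a" and x y :: 'a
  assumes graph: "simple_graph V E"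
    and conn: "connected_in V E"
    and ncv: "no_cut_vertex V E"
    and bfs: "bfs_tree V E s p"
    and heavy: "heavy_child_fun V s p hc"
    and att: "attach_edges V E s p uC vC"
    and hp: "heavy_pair V E s p hc uC vC x y"
    and above: "anc p y (rx V E p hc x)" "y \<noteq> rx V E p hc x"
    and onpath: "anc p y (uC x (Hc V E p hc x))"
    and hedge: "tedge_on_pix V s p uC x (Hc V E p hc x) y (hc y)"
  shows "connected_in (V - {x, y}) E \<longleftrightarrow>
    (\<exists>u v. E u v \<and> u \<in> V - {x, y} \<and> v \<in> V - {x, y} \<and>
       (u \<in> Chat V E s p hc uC x y \<union> Hc V E p hc y) \<noteq> (v \<in> Chat V E s p hc uC x y \<union> Hc V E p hc y))"
proof -
  interpret tr V E s p using graph bfs by unfold_locales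
  define W where "W = V - {x, y}"
  define R where "R = RA W E"
  define Vx' where "Vx' = Vx V p x"
  define Vy' where "Vy' = Vx V p y"
  define Hx where "Hx = Hc V E p hc x"
  define Hy where "Hy = Hc V E p hc y"
  define S where "S = Chat V E s p hc uC x y \<union> Hy"
  have xV: "x \<in> V" and yV: "y \<in> V" and nxy: "\<not> anc p x y" and nyx: "\<not> anc p y x"
    using hp by (auto simp: heavy_pair_def independent_def)
  have xs: "x \<noteq> s" using nxy root yV by blast
  have ys: "y \<noteq> s" using nyx root xV by blast
  have xy: "x \<noteq> y" using nxy anc_refl by blast
  have Vx'W: "Vx' \<subseteq> W" using nxy by (auto simp: Vx'_def W_def Vx_def VT_def)
  have Vy'W: "Vy' \<subseteq> W" using nyx by (auto simp: Vy'_def W_def Vx_def VT_def)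
  have disj: "\<not> (anc p x v \<and> anc p y v)" for v using anc_lin[of x v y] nxy nyx by blast
  have tcy: "tchild V s p y (hc y)" and hyu: "anc p (hc y) (uC x Hx)"
    using hedge by (auto simp: tedge_on_pix_def Hx_def)
  have hyVy: "hc y \<in> Vy'" using tchild_props[OF tcy] by (auto simp: Vy'_def Vx_def VT_def)
  have HyVy: "Hy \<subseteq> Vy'" unfolding Hy_def Hc_def Vy'_def by (rule comp_sub)
  have hyHy: "hc y \<in> Hy" unfolding Hy_def Hc_def using comp_self[OF hyVy[unfolded Vy'_def]] .
  have Chat_iff: "z \<in> Chat V E s p hc uC x y \<longleftrightarrow>
      (\<exists>C\<in>comps Vx' E. tedge_on_pix V s p uC x C y (hc y) \<and> z \<in> C)" for z
    by (auto simp: Chat_def Vx'_def)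
  have compsVx: "C \<subseteq> Vx'" if "C \<in> comps Vx' E" for C
  proof -
    from that obtain c where "C = comp_of Vx' E c" by (auto simp: comps_def)
    then show ?thesis using comp_sub by simp
  qed
  have compsVy: "C \<subseteq> Vy'" if "C \<in> comps Vy' E" for C
  proof -
    from that obtain c where "C = comp_of Vy' E c" by (auto simp: comps_def)
    then show ?thesis using comp_sub by simp
  qed
  have comps_eq: "comp_of A E v = C" if "C \<in> comps A E" "v \<in> C" for A C v
  proof -
    from that obtain c where "C = comp_of A E c" by (auto simp: comps_def)
    then show ?thesis using comp_eq that(2) by simp
  qed
  have ChatVx: "Chat V E s p hc uC x y \<subseteq> Vx'"
  proof
    fix z assume "z \<in> Chat V E s p hc uC x y"
    then obtain C where "C \<in> comps Vx' E" "z \<in> C" using Chat_iff by blast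
    then show "z \<in> Vx'" using compsVx by blast
  qed
  have attx: "E (uC x C) (vC x C) \<and> vC x C \<in> C \<and> uC x C \<in> V \<and> \<not> anc p x (uC x C)"
    if "C \<in> comps Vx' E" for C
  proof -
    have "x \<in> V - {s}" using xV xs by blast
    then have "\<forall>C\<in>comps (Vx V p x) E. E (uC x C) (vC x C) \<and> vC x C \<in> C \<and> uC x C \<in> V \<and> uC x C \<notin> VT V p x"
      using att unfolding attach_edges_def by blast
    then have "E (uC x C) (vC x C) \<and> vC x C \<in> C \<and> uC x C \<in> V \<and> uC x C \<notin> VT V p x"
      using that unfolding Vx'_def by blast
    then show ?thesis by (simp add: VT_def)
  qed
  have atty: "E (uC y C) (vC y C) \<and> vC y C \<in> C \<and> uC y C \<in> V \<and> \<not> anc p y (uC y C)"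
    if "C \<in> comps Vy' E" for C
  proof -
    have "y \<in> V - {s}" using yV ys by blast
    then have "\<forall>C\<in>comps (Vx V p y) E. E (uC y C) (vC y C) \<and> vC y C \<in> C \<and> uC y C \<in> V \<and> uC y C \<notin> VT V p y"
      using att unfolding attach_edges_def by blast
    then have "E (uC y C) (vC y C) \<and> vC y C \<in> C \<and> uC y C \<in> V \<and> uC y C \<notin> VT V p y"
      using that unfolding Vy'_def by blast
    then show ?thesis by (simp add: VT_def)
  qed
  have compconn: "R\<^sup>*\<^sup>* z1 z2" if "C \<in> comps A E" "z1 \<in> C" "z2 \<in> C" "A \<subseteq> W" for A C z1 z2
  proof -
    from that(1) obtain c where c: "C = comp_of A E c" by (auto simp: comps_def)
    show ?thesis unfolding R_def using comp_conn[of z1 A c z2 W] that(2,3,4) c by simp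
  qed
  have Rstep: "R\<^sup>*\<^sup>* a c" if "R\<^sup>*\<^sup>* a b" "E b c" "b \<in> W" "c \<in> W" for a b c
    using that by (simp add: R_def RA_def rtranclp.rtrancl_into_rtrancl)
  have outs: "R\<^sup>*\<^sup>* s v" if "v \<in> V" "\<not> anc p x v" "\<not> anc p y v" for v
    unfolding R_def W_def by (rule outside[OF that])
  have notW: "v \<in> W" if "v \<in> V" "\<not> anc p x v" "\<not> anc p y v" for v
    using that anc_refl[of x] anc_refl[of y] unfolding W_def by blast
  have sub_y: "w \<in> comp_of Vy' E c" if "c \<in> Vy'" "anc p c w" "w \<in> V" for c w
    using that unfolding Vy'_def by (rule subtree[OF yV])
  have sub_x: "w \<in> comp_of Vx' E c" if "c \<in> Vx'" "anc p c w" "w \<in> V" for c w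
    using that unfolding Vx'_def by (rule subtree[OF xV])
  have childVy: "c \<in> Vy'" if "tchild V s p y c" for c
    using tchild_props[OF that] by (auto simp: Vy'_def Vx_def VT_def)
  have childVx: "c \<in> Vx'" if "tchild V s p x c" for c
    using tchild_props[OF that] by (auto simp: Vx'_def Vx_def VT_def)

  
  have case2: "R\<^sup>*\<^sup>* s z" if C: "C \<in> comps Vx' E" "\<not> tedge_on_pix V s p uC x C y (hc y)" "z \<in> C" for C z
  proof -
    let ?u = "uC x C" and ?v = "vC x C"
    have a: "E ?u ?v" "?v \<in> C" "?u \<in> V" "\<not> anc p x ?u" using attx[OF C(1)] by auto
    have vW: "?v \<in> W" using a compsVx[OF C(1)] Vx'W by blast
    have "R\<^sup>*\<^sup>* s ?u \<and> ?u \<in> W"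
    proof (cases "anc p y ?u")
      case False then show ?thesis using outs[OF a(3) a(4) False] notW[OF a(3) a(4) False] by blast
    next
      case True
      have "\<not> ordered_light_pair V E s p hc uC vC x y" using hp by (simp add: heavy_pair_def)
      then have "C \<notin> fully_sensitive V E s p uC vC x y"
        using C(2) by (auto simp: ordered_light_pair_def)
      then obtain y' where y': "tedge_on_pix V s p uC x C y y'"
          "\<not> on_pix p uC vC y (comp_of (Vx V p y) E y') x"
        using C(1) True by (auto simp: fully_sensitive_def on_pix_def Vx'_def)
      define D where "D = comp_of Vy' E y'"
      have tc: "tchild V s p y y'" "anc p y' ?u" using y'(1) by (auto simp: tedge_on_pix_def)
      have y'V: "y' \<in> Vy'" using childVy tc by blast
      have D: "D \<in> comps Vy' E" using y'V D_def by (simp add: comps_def)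
      have b: "E (uC y D) (vC y D)" "vC y D \<in> D" "uC y D \<in> V" "\<not> anc p y (uC y D)"
        using atty[OF D] by auto
      have c: "\<not> anc p x (uC y D)" using y'(2) by (simp add: on_pix_def D_def Vy'_def)
      have vDW: "vC y D \<in> W" using b(2) compsVy[OF D] Vy'W by blast
      have "R\<^sup>*\<^sup>* s (vC y D)" using Rstep[OF outs[OF b(3) c b(4)] b(1) notW[OF b(3) c b(4)] vDW] .
      moreover have uD: "?u \<in> D" using sub_y[OF y'V tc(2) a(3)] D_def by simp
      ultimately have "R\<^sup>*\<^sup>* s ?u" using compconn[OF D b(2) uD Vy'W] by simp
      moreover have "?u \<in> W" using uD compsVy[OF D] Vy'W by blast
      ultimately show ?thesis by blast
    qed
    then have "R\<^sup>*\<^sup>* s ?v" using Rstep[of s ?u ?v] a(1) vW by blast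
    then show ?thesis using compconn[OF C(1) a(2) C(3) Vx'W] by simp
  qed

  
  have case3: "R\<^sup>*\<^sup>* s z" if D: "D \<in> comps Vy' E" "D \<noteq> Hy" "z \<in> D" for D z
  proof -
    let ?u = "uC y D" and ?v = "vC y D"
    have a: "E ?u ?v" "?v \<in> D" "?u \<in> V" "\<not> anc p y ?u" using atty[OF D(1)] by auto
    have vVy: "?v \<in> Vy'" using a(2) compsVy[OF D(1)] by blast
    have vW: "?v \<in> W" using vVy Vy'W by blast
    have "R\<^sup>*\<^sup>* s ?u \<and> ?u \<in> W"
    proof (cases "anc p x ?u")
      case False then show ?thesis using outs[OF a(3) False a(4)] notW[OF a(3) False a(4)] by blast
    next
      case True
      have nolp: "\<not> ordered_light_pair V E s p hc uC vC y x" using hp by (simp add: heavy_pair_def)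
      show ?thesis
      proof (cases "D \<in> fully_sensitive V E s p uC vC y x")
        case False
        then obtain x' where x': "tedge_on_pix V s p uC y D x x'"
            "\<not> on_pix p uC vC x (comp_of (Vx V p x) E x') y"
          using D(1) True by (auto simp: fully_sensitive_def on_pix_def Vy'_def)
        define C where "C = comp_of Vx' E x'"
        have tc: "tchild V s p x x'" "anc p x' ?u" using x'(1) by (auto simp: tedge_on_pix_def)
        have x'V: "x' \<in> Vx'" using childVx tc by blast
        have C: "C \<in> comps Vx' E" using x'V C_def by (simp add: comps_def)
        have b: "E (uC x C) (vC x C)" "vC x C \<in> C" "uC x C \<in> V" "\<not> anc p x (uC x C)"
          using attx[OF C] by auto
        have c: "\<not> anc p y (uC x C)" using x'(2) by (simp add: on_pix_def C_def Vx'_def)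
        have vCW: "vC x C \<in> W" using b(2) compsVx[OF C] Vx'W by blast
        have "R\<^sup>*\<^sup>* s (vC x C)" using Rstep[OF outs[OF b(3) b(4) c] b(1) notW[OF b(3) b(4) c] vCW] .
        moreover have uC: "?u \<in> C" using sub_x[OF x'V tc(2) a(3)] C_def by simp
        ultimately have "R\<^sup>*\<^sup>* s ?u" using compconn[OF C b(2) uC Vx'W] by simp
        moreover have "?u \<in> W" using uC compsVx[OF C] Vx'W by blast
        ultimately show ?thesis by blast
      next
        case True
        then have te: "tedge_on_pix V s p uC y D x (hc x)"
          using nolp by (auto simp: ordered_light_pair_def)
        then have tcx: "tchild V s p x (hc x)" "anc p (hc x) ?u" by (auto simp: tedge_on_pix_def)
        have hxV: "hc x \<in> Vx'" using childVx tcx by blast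
        have uHx: "?u \<in> Hx" using sub_x[OF hxV tcx(2) a(3)] by (simp add: Hx_def Hc_def Vx'_def)
        have vnx: "\<not> anc p x ?v" using vVy disj by (auto simp: Vy'_def Vx_def VT_def)
        have vR: "?v \<in> Rset V E p hc x"
          using uHx vnx vVy Esym[OF a(1)] by (auto simp: Rset_def VT_def Vy'_def Vx_def Hx_def)
        have HxC: "Hx \<in> comps Vx' E" using hxV by (simp add: comps_def Hx_def Hc_def Vx'_def)
        have h: "E (uC x Hx) (vC x Hx)" "vC x Hx \<in> Hx" "uC x Hx \<in> V" "\<not> anc p x (uC x Hx)"
          using attx[OF HxC] by auto
        have uHR: "uC x Hx \<in> Rset V E p hc x"
          using h by (auto simp: Rset_def VT_def Hx_def)
        have RV: "Rset V E p hc x \<subseteq> V" by (auto simp: Rset_def)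
        have rxa: "\<forall>v\<in>Rset V E p hc x. anc p (rx V E p hc x) v"
          using tlca_ok[OF RV uHR] by (simp add: rx_def)
        have r1: "anc p (rx V E p hc x) ?v" and r2: "anc p (rx V E p hc x) (uC x Hx)"
          using rxa vR uHR by auto
        have False
        proof (cases "anc p (hc y) (rx V E p hc x)")
          case True
          have h1: "anc p (hc y) ?v" by (rule anc_trans[OF True r1])
          have vV: "?v \<in> V" using vVy by (simp add: Vy'_def Vx_def VT_def)
          have "?v \<in> Hy" using sub_y[OF hyVy h1 vV] by (simp add: Hy_def Hc_def Vy'_def)
          then have "comp_of Vy' E ?v = Hy" using comp_eq[of ?v Vy' "hc y"] by (simp add: Hy_def Hc_def Vy'_def)
          moreover have "comp_of Vy' E ?v = D" using comps_eq[OF D(1) a(2)] .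
          ultimately show False using D(2) by simp
        next
          case False
          then have r3: "anc p (rx V E p hc x) (hc y)" using anc_lin[OF r2 hyu] by blast
          have r4: "rx V E p hc x \<noteq> hc y" using False anc_refl by metis
          have "anc p (rx V E p hc x) (p (hc y))" by (rule anc_step[OF r3 r4])
          then have "anc p (rx V E p hc x) y" using tcy by (simp add: tchild_def)
          then have "rx V E p hc x = y" by (rule anc_antisym[OF yV _ above(1)])
          then show False using above(2) by simp
        qed
        then show ?thesis by blast
      qed
    qed
    then have "R\<^sup>*\<^sup>* s ?v" using Rstep[of s ?u ?v] a(1) vW by blast
    then show ?thesis using compconn[OF D(1) a(2) D(3) Vy'W] by simp
  qed

  
  have case4: "R\<^sup>*\<^sup>* (hc y) z" if "z \<in> S" for z
  proof (cases "z \<in> Hy")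
    case True
    have "Hy \<in> comps Vy' E" using hyVy by (simp add: comps_def Hy_def Hc_def Vy'_def)
    then show ?thesis using compconn[OF _ hyHy True Vy'W] by blast
  next
    case False
    then have "z \<in> Chat V E s p hc uC x y" using that by (simp add: S_def)
    then obtain C where C: "C \<in> comps Vx' E" "tedge_on_pix V s p uC x C y (hc y)" "z \<in> C"
      using Chat_iff by blast
    have a: "E (uC x C) (vC x C)" "vC x C \<in> C" "uC x C \<in> V" using attx[OF C(1)] by auto
    have "anc p (hc y) (uC x C)" using C(2) by (simp add: tedge_on_pix_def)
    then have uHy: "uC x C \<in> Hy" using sub_y[OF hyVy _ a(3)] by (simp add: Hy_def Hc_def Vy'_def)
    have "Hy \<in> comps Vy' E" using hyVy by (simp add: comps_def Hy_def Hc_def Vy'_def)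
    then have r: "R\<^sup>*\<^sup>* (hc y) (uC x C)" using compconn[OF _ hyHy uHy Vy'W] by blast
    have w1: "uC x C \<in> W" using uHy HyVy Vy'W by blast
    have w2: "vC x C \<in> W" using a(2) compsVx[OF C(1)] Vx'W by blast
    have "R\<^sup>*\<^sup>* (hc y) (vC x C)" by (rule Rstep[OF r a(1) w1 w2])
    then show ?thesis using compconn[OF C(1) a(2) C(3) Vx'W] by simp
  qed

  have good: "R\<^sup>*\<^sup>* s w" if "w \<in> W" "w \<notin> S" for w
  proof (cases "anc p x w")
    case True
    then have wx: "w \<in> Vx'" using that by (auto simp: W_def Vx'_def Vx_def VT_def)
    define C where "C = comp_of Vx' E w"
    have C: "C \<in> comps Vx' E" "w \<in> C" using wx comp_self by (auto simp: C_def comps_def)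
    have "w \<notin> Chat V E s p hc uC x y" using that(2) by (simp add: S_def)
    then have "\<not> tedge_on_pix V s p uC x C y (hc y)" using C Chat_iff by blast
    then show ?thesis by (rule case2[OF C(1) _ C(2)])
  next
    case False
    show ?thesis
    proof (cases "anc p y w")
      case True
      then have wy: "w \<in> Vy'" using that by (auto simp: W_def Vy'_def Vx_def VT_def)
      define D where "D = comp_of Vy' E w"
      have D: "D \<in> comps Vy' E" "w \<in> D" using wy comp_self by (auto simp: D_def comps_def)
      have "D \<noteq> Hy" using D(2) that(2) unfolding S_def by blast
      then show ?thesis by (rule case3[OF D(1) _ D(2)])
    next
      case False
      have "w \<in> V" using that(1) unfolding W_def by blast
      then show ?thesis using outs[OF _ \<open>\<not> anc p x w\<close> False] by blast
    qed
  qed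

  have Rsym: "R\<^sup>*\<^sup>* b a" if "R\<^sup>*\<^sup>* a b" for a b using that unfolding R_def by (rule rt_sym)

  show ?thesis
  proof
    assume cW: "connected_in (V - {x, y}) E"
    have pyV: "p y \<in> V" using pV yV by blast
    have pyy: "anc p (p y) y" by (rule anc_p)
    have pny: "p y \<noteq> y" using cyc[OF yV, of 0] ys by auto
    have n1: "\<not> anc p y (p y)" using anc_antisym[OF yV pyy] pny by blast
    have n2: "\<not> anc p x (p y)" using anc_trans[OF _ pyy] nxy by blast
    have pyW: "p y \<in> W" using pyV pny pyy nxy unfolding W_def by auto
    have "p y \<notin> Vy'" using n1 by (simp add: Vy'_def Vx_def VT_def)
    moreover have "p y \<notin> Vx'" using n2 by (simp add: Vx'_def Vx_def VT_def)
    ultimately have pyS: "p y \<notin> S" using HyVy ChatVx unfolding S_def by blast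
    have hyW: "hc y \<in> W" "hc y \<in> S" using hyHy HyVy Vy'W unfolding S_def by auto
    have "p y \<in> comp_of W E (hc y)" using cW pyW hyW(1) unfolding connected_in_def comp_of_def W_def by blast
    then have "R\<^sup>*\<^sup>* (hc y) (p y)" by (simp add: comp_iff R_def)
    then obtain a b where ab: "R a b" "a \<in> S" "b \<notin> S"
      using crossing[of R "hc y" "p y" "\<lambda>v. v \<in> S"] hyW(2) pyS by blast
    then have "E a b" "a \<in> V - {x,y}" "b \<in> V - {x,y}" by (auto simp: R_def RA_def W_def)
    then show "\<exists>u v. E u v \<and> u \<in> V - {x, y} \<and> v \<in> V - {x, y} \<and>
       (u \<in> Chat V E s p hc uC x y \<union> Hc V E p hc y) \<noteq> (v \<in> Chat V E s p hc uC x y \<union> Hc V E p hc y)"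
      using ab(2,3) unfolding S_def Hy_def by blast
  next
    assume "\<exists>u v. E u v \<and> u \<in> V - {x, y} \<and> v \<in> V - {x, y} \<and>
       (u \<in> Chat V E s p hc uC x y \<union> Hc V E p hc y) \<noteq> (v \<in> Chat V E s p hc uC x y \<union> Hc V E p hc y)"
    then obtain u v where uv: "E u v" "u \<in> W" "v \<in> W" "(u \<in> S) \<noteq> (v \<in> S)"
      unfolding S_def Hy_def W_def by blast
    have "\<exists>a b. E a b \<and> a \<in> W \<and> b \<in> W \<and> a \<in> S \<and> b \<notin> S"
    proof (cases "u \<in> S")
      case True then show ?thesis using uv by blast
    next
      case False then show ?thesis using uv Esym[OF uv(1)] by blast
    qed
    then obtain a b where ab: "E a b" "a \<in> W" "b \<in> W" "a \<in> S" "b \<notin> S" by blast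
    have r1: "R\<^sup>*\<^sup>* s b" by (rule good[OF ab(3) ab(5)])
    have "R b a" using ab Esym by (simp add: R_def RA_def)
    then have r2: "R\<^sup>*\<^sup>* s a" using r1 by simp
    have r3: "R\<^sup>*\<^sup>* a (hc y)" by (rule Rsym[OF case4[OF ab(4)]])
    have shy: "R\<^sup>*\<^sup>* s (hc y)" using r2 r3 by simp
    have all: "R\<^sup>*\<^sup>* s w" if "w \<in> W" for w
    proof (cases "w \<in> S")
      case True show ?thesis using rtranclp_trans[OF shy case4[OF True]] .
    next
      case False then show ?thesis by (rule good[OF that])
    qed
    show "connected_in (V - {x, y}) E"
      unfolding connected_in_def
    proof (intro ballI)
      fix u v assume u: "u \<in> V - {x, y}" and v: "v \<in> V - {x, y}"
      have "R\<^sup>*\<^sup>* u v" using rtranclp_trans[OF Rsym[OF all[of u]] all[of v]] u v unfolding W_def by blast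
      then have "v \<in> comp_of W E u" using u by (simp add: comp_iff R_def W_def)
      then show "\<exists>xs. walk_in (V - {x, y}) E xs \<and> hd xs = u \<and> last xs = v"
        by (simp add: comp_of_def W_def)
    qed
  qed
qed

end
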